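(* Let $n\ge 1$ and let $G_1,\ldots,G_n$ be finite simple graphs with pairwise disjoint vertex sets. For each $1\le i\le n$ let $A_i\subseteq V(G_i)$ be a subset such that (a) $t_i:=\alpha(G_i)-\alpha(G_i\setminus A_i)$ is an odd integer with $t_i\ge 1$; (b) $\deg(G_i)-\deg(G_i\setminus A_i)=t_i-1$; (c) the leading coefficients of the $2n$ polynomials $h_{G_1}(t),\ldots,h_{G_n}(t),h_{G_1\setminus A_1}(t),\ldots,h_{G_n\setminus A_n}(t)$ are either all positive or all negative. Let $H_n$ be the graph with vertex set $V(H_n)=V(G_1)\cup\cdots\cup V(G_n)\cup\{y_1,\ldots,y_n\}$ (the $y_i$ new vertices) and edge set $E(H_n)=E(G_1)\cup\cdots\cup E(G_n)\cup\{\{y_i,x\}\mid x\in A_i,\ 1\le i\le n\}\cup\{\{y_i,y_j\}\mid i\ne j\}$. Let $R=\mathbb{K}[V(H_n)]$. Then $$\dim(R/I(H_n))=\sum_{i=1}^n\alpha(G_i)\quad\text{and}\quad \deg\big(h_{R/I(H_n)}(t)\big)=1+\sum_{i=1}^n\deg(G_i).$$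
   Context: All graphs are finite and simple. For a graph $G$ with vertex set $V(G)$, let $\mathbb{K}[V(G)]$ be the polynomial ring over a field $\mathbb{K}$ whose variables are the vertices, and let the edge ideal be $I(G)=(x_ix_j\mid \{x_i,x_j\}\in E(G))$ (so $I(G)=0$ if $G$ has no edges). For a homogeneous ideal $I$ of $S=\mathbb{K}[V(G)]$ (standard grading), the Hilbert series $\sum_{i\ge0}\dim_{\mathbb{K}}(S/I)_it^i$ can be written uniquely as $h_{S/I}(t)/(1-t)^{\dim(S/I)}$ with $h_{S/I}(t)\in\mathbb{Z}[t]$ and $h_{S/I}(1)\neq 0$; $h_{S/I}(t)$ is the $h$-polynomial. Write $h_G(t):=h_{\mathbb{K}[V(G)]/I(G)}(t)$ and $\deg(G):=\deg h_G(t)$. An independent set is a set of vertices with no edges among them; $\alpha(G)$ is the maximum size of an independent set (so $\dim \mathbb{K}[V(G)]/I(G)=\alpha(G)$). For $A\subseteq V(G)$, $G\setminus A$ denotes the induced subgraph on $V(G)\setminus A$ (with polynomial ring $\mathbb{K}[V(G)\setminus A]$); if $V(G)\setminus A=\emptyset$ then $\alpha(G\setminus A)=0$ and $h_{G\setminus A}(t)=1$. *)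

theory Defs
  imports "HOL-Library.Multiset" "HOL-Computational_Algebra.Polynomial_FPS"
begin

definition simple_graph :: "'a set \<Rightarrow> ('a \<Rightarrow> 'a \<Rightarrow> bool) \<Rightarrow> bool" where
  "simple_graph V E \<longleftrightarrow> finite V \<and> (\<forall>x y. E x y \<longrightarrow> E y x)
     \<and> (\<forall>x. \<not> E x x) \<and> (\<forall>x y. E x y \<longrightarrow> x \<in> V \<and> y \<in> V)"

definition indep_set :: "'a set \<Rightarrow> ('a \<Rightarrow> 'a \<Rightarrow> bool) \<Rightarrow> 'a set \<Rightarrow> bool" where
  "indep_set V E S \<longleftrightarrow> S \<subseteq> V \<and> (\<forall>x\<in>S. \<forall>y\<in>S. \<not> E x y)"

definition indep_num :: "'a set \<Rightarrow> ('a \<Rightarrow> 'a \<Rightarrow> bool) \<Rightarrow> nat" where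
  "indep_num V E = Max (card ` {S. indep_set V E S})"

text \<open>Monomials in the variables V are finite multisets over V.
  The K-dimension of (K[V]/I(G))_i is the number of degree-i monomials not in
  I(G) (they form a K-basis of the quotient, I(G) being a monomial ideal).\<close>
definition edge_monomial_ideal_mem :: "('a \<Rightarrow> 'a \<Rightarrow> bool) \<Rightarrow> 'a multiset \<Rightarrow> bool" where
  "edge_monomial_ideal_mem E m \<longleftrightarrow> (\<exists>x y. E x y \<and> {#x, y#} \<subseteq># m)"

definition hilbert_fun :: "'a set \<Rightarrow> ('a \<Rightarrow> 'a \<Rightarrow> bool) \<Rightarrow> nat \<Rightarrow> nat" where
  "hilbert_fun V E i =
     card {m. set_mset m \<subseteq> V \<and> size m = i \<and> \<not> edge_monomial_ideal_mem E m}"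

definition hilbert_series :: "'a set \<Rightarrow> ('a \<Rightarrow> 'a \<Rightarrow> bool) \<Rightarrow> int fps" where
  "hilbert_series V E = Abs_fps (\<lambda>i. int (hilbert_fun V E i))"

definition hilb_repr :: "'a set \<Rightarrow> ('a \<Rightarrow> 'a \<Rightarrow> bool) \<Rightarrow> nat \<Rightarrow> int poly \<Rightarrow> bool" where
  "hilb_repr V E d h \<longleftrightarrow>
     fps_of_poly h = hilbert_series V E * (1 - fps_X) ^ d \<and> poly h 1 \<noteq> 0"

text \<open>dim(K[V]/I(G)): the exponent d in the (unique) representation above.\<close>
definition quot_dim :: "'a set \<Rightarrow> ('a \<Rightarrow> 'a \<Rightarrow> bool) \<Rightarrow> nat" where
  "quot_dim V E = (THE d. \<exists>h. hilb_repr V E d h)"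

definition h_poly :: "'a set \<Rightarrow> ('a \<Rightarrow> 'a \<Rightarrow> bool) \<Rightarrow> int poly" where
  "h_poly V E = (THE h. \<exists>d. hilb_repr V E d h)"

definition hdeg :: "'a set \<Rightarrow> ('a \<Rightarrow> 'a \<Rightarrow> bool) \<Rightarrow> nat" where
  "hdeg V E = degree (h_poly V E)"

text \<open>The graph H_n: old vertices Inl x, new vertices y_i = Inr i (i < n).\<close>
definition H_verts :: "nat \<Rightarrow> (nat \<Rightarrow> 'a set) \<Rightarrow> ('a + nat) set" where
  "H_verts n Vs = Inl ` (\<Union>i<n. Vs i) \<union> Inr ` {..<n}"

fun H_edges :: "nat \<Rightarrow> (nat \<Rightarrow> 'a \<Rightarrow> 'a \<Rightarrow> bool) \<Rightarrow> (nat \<Rightarrow> 'a set)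
                 \<Rightarrow> ('a + nat) \<Rightarrow> ('a + nat) \<Rightarrow> bool" where
  "H_edges n Es As (Inl x) (Inl y) = (\<exists>i<n. Es i x y)"
| "H_edges n Es As (Inr i) (Inl x) = (i < n \<and> x \<in> As i)"
| "H_edges n Es As (Inl x) (Inr i) = (i < n \<and> x \<in> As i)"
| "H_edges n Es As (Inr i) (Inr j) = (i < n \<and> j < n \<and> i \<noteq> j)"

end

theory Submission
  imports Defs
begin

definition Cnt :: "'a set \<Rightarrow> nat \<Rightarrow> nat" where
  "Cnt S i = card {m. set_mset m = S \<and> size m = i}"

definition ES :: "'a set \<Rightarrow> int fps" where
  "ES S = Abs_fps (\<lambda>i. int (Cnt S i))"

lemma fin_exact: "finite S \<Longrightarrow> finite {m. set_mset m = S \<and> size m = i}"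
  by (rule finite_subset[OF _ finite_multisets_of_size[of S i]]) (auto simp: multisets_of_size_def)

lemma Cnt_empty: "Cnt {} i = (if i = 0 then 1 else 0)"
proof -
  have "{m. set_mset m = ({}::'a set) \<and> size m = i} = (if i = 0 then {{#}} else {})"
    by auto
  then show ?thesis by (simp add: Cnt_def)
qed

lemma Cnt_insert0: "Cnt (insert a T) 0 = 0"
  by (simp add: Cnt_def)

lemma Cnt_insert_Suc:
  assumes "finite T" "a \<notin> T"
  shows "Cnt (insert a T) (Suc j) = Cnt T j + Cnt (insert a T) j"
proof -
  let ?A = "{m. set_mset m = T \<and> size m = j}"
  let ?B = "{m. set_mset m = insert a T \<and> size m = j}"
  have eq: "{m. set_mset m = insert a T \<and> size m = Suc j} = (\<lambda>m. m + {#a#}) ` (?A \<union> ?B)"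
  proof
    show "(\<lambda>m. m + {#a#}) ` (?A \<union> ?B) \<subseteq> {m. set_mset m = insert a T \<and> size m = Suc j}"
    proof
      fix m' assume "m' \<in> (\<lambda>m. m + {#a#}) ` (?A \<union> ?B)"
      then obtain m where m: "m \<in> ?A \<union> ?B" and m': "m' = m + {#a#}" by blast
      have "set_mset m' = insert a (set_mset m)" using m' by simp
      moreover have "size m' = Suc j" using m m' by auto
      ultimately show "m' \<in> {m. set_mset m = insert a T \<and> size m = Suc j}" using m by auto
    qed
  next
    show "{m. set_mset m = insert a T \<and> size m = Suc j} \<subseteq> (\<lambda>m. m + {#a#}) ` (?A \<union> ?B)"
    proof
      fix m assume m: "m \<in> {m. set_mset m = insert a T \<and> size m = Suc j}"
      then have am: "a \<in># m" by auto
      let ?m = "m - {#a#}"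
      have mm: "m = ?m + {#a#}" using am by simp
      have sz: "size ?m = j" using m am by (simp add: size_Diff_singleton)
      have "set_mset ?m = T \<or> set_mset ?m = insert a T"
      proof (cases "count m a = 1")
        case True
        then have "a \<notin># ?m" by (simp add: not_in_iff)
        moreover have "set_mset ?m \<subseteq> insert a T" using m by (auto dest: in_diffD)
        moreover have "T \<subseteq> set_mset ?m"
        proof
          fix x assume "x \<in> T" then have "x \<noteq> a" "x \<in># m" using assms m by auto
          then show "x \<in># ?m" by (simp add: in_diff_count)
        qed
        ultimately show ?thesis by blast
      next
        case False
        have "0 < count m a" using am by simp
        then have "count m a \<ge> 2" using False by linarith
        then have "a \<in># ?m" by (simp add: in_diff_count)
        moreover have "set_mset ?m \<subseteq> insert a T" using m by (auto dest: in_diffD)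
        moreover have "T \<subseteq> set_mset ?m"
        proof
          fix x assume "x \<in> T" then have "x \<noteq> a" "x \<in># m" using assms m by auto
          then show "x \<in># ?m" by (simp add: in_diff_count)
        qed
        ultimately show ?thesis by blast
      qed
      then show "m \<in> (\<lambda>m. m + {#a#}) ` (?A \<union> ?B)" using mm sz by blast
    qed
  qed
  have "card ((\<lambda>m. m + {#a#}) ` (?A \<union> ?B)) = card (?A \<union> ?B)"
    by (rule card_image) (auto simp: inj_on_def)
  also have "\<dots> = card ?A + card ?B"
  proof (rule card_Un_disjoint)
    show "finite ?A" using assms(1) by (rule fin_exact)
    show "finite ?B" using assms(1) by (intro fin_exact) simp
    show "?A \<inter> ?B = {}" using assms(2) by auto
  qed
  finally show ?thesis unfolding Cnt_def eq .
qed

lemma ES_insert: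
  assumes "finite T" "a \<notin> T"
  shows "ES (insert a T) * (1 - fps_X) = fps_X * ES T"
proof -
  have e: "ES (insert a T) * (1 - fps_X) = ES (insert a T) - fps_X * ES (insert a T)"
    by (simp only: right_diff_distrib mult_1_right mult.commute[of "ES (insert a T)" fps_X])
  show ?thesis
  proof (rule fps_ext)
    fix i
    show "fps_nth (ES (insert a T) * (1 - fps_X)) i = fps_nth (fps_X * ES T) i"
    proof (cases i)
      case 0 then show ?thesis unfolding e by (simp add: ES_def Cnt_insert0)
    next
      case (Suc j) then show ?thesis unfolding e
        by (simp add: ES_def Cnt_insert_Suc[OF assms])
    qed
  qed
qed

lemma ES_card:
  assumes "finite S"
  shows "ES S * (1 - fps_X) ^ card S = fps_X ^ card S"
  using assms
proof (induction S rule: finite_induct)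
  case empty
  have "ES {} = 1" by (rule fps_ext) (simp add: ES_def Cnt_empty)
  then show ?case by simp
next
  case (insert a T)
  have c: "card (insert a T) = Suc (card T)" using insert by simp
  have "ES (insert a T) * (1 - fps_X) ^ card (insert a T) = (ES (insert a T) * (1 - fps_X)) * (1 - fps_X) ^ card T"
    by (simp only: c power_Suc mult.assoc)
  also have "\<dots> = fps_X * (ES T * (1 - fps_X) ^ card T)"
    unfolding ES_insert[OF insert(1,2)] by (simp only: mult.assoc)
  also have "\<dots> = fps_X ^ card (insert a T)" unfolding insert.IH c power_Suc ..
  finally show ?case .
qed


definition IS :: "'a set \<Rightarrow> ('a \<Rightarrow> 'a \<Rightarrow> bool) \<Rightarrow> 'a set set" where
  "IS V E = {S. indep_set V E S}"

definition px :: "int poly" where "px = [:0, 1:]"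

definition W :: "nat \<Rightarrow> 'a set \<Rightarrow> int poly" where
  "W a S = px ^ card S * (1 - px) ^ (a - card S)"

definition hp :: "'a set \<Rightarrow> ('a \<Rightarrow> 'a \<Rightarrow> bool) \<Rightarrow> int poly" where
  "hp V E = (\<Sum>S\<in>IS V E. W (indep_num V E) S)"

lemma IS_finite: "finite V \<Longrightarrow> finite (IS V E)"
  by (rule finite_subset[of _ "Pow V"]) (auto simp: IS_def indep_set_def)

lemma IS_empty: "{} \<in> IS V E"
  by (simp add: IS_def indep_set_def)

lemma IS_sub: "S \<in> IS V E \<Longrightarrow> S \<subseteq> V"
  by (simp add: IS_def indep_set_def)

lemma indep_num_ge: "finite V \<Longrightarrow> S \<in> IS V E \<Longrightarrow> card S \<le> indep_num V E"
  unfolding indep_num_def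
  by (rule Max_ge) (use IS_finite[of V E] in \<open>auto simp: IS_def\<close>)

lemma indep_num_ex: "finite V \<Longrightarrow> \<exists>S\<in>IS V E. card S = indep_num V E"
proof -
  assume "finite V"
  then have "indep_num V E \<in> card ` {S. indep_set V E S}"
    unfolding indep_num_def
    by (intro Max_in) (use IS_finite[of V E] IS_empty[of V E] in \<open>auto simp: IS_def\<close>)
  then show ?thesis by (auto simp: IS_def)
qed

lemma mem_iff:
  assumes irr: "\<forall>x y. E x y \<longrightarrow> x \<noteq> y"
  shows "edge_monomial_ideal_mem E m \<longleftrightarrow> \<not> (\<forall>x\<in>set_mset m. \<forall>y\<in>set_mset m. \<not> E x y)"
proof
  assume "edge_monomial_ideal_mem E m"
  then obtain x y where "E x y" "{#x, y#} \<subseteq># m" by (auto simp: edge_monomial_ideal_mem_def)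
  moreover have "x \<in># m" by (rule mset_subset_eqD[OF \<open>{#x, y#} \<subseteq># m\<close>]) simp
  moreover have "y \<in># m" by (rule mset_subset_eqD[OF \<open>{#x, y#} \<subseteq># m\<close>]) simp
  ultimately show "\<not> (\<forall>x\<in>set_mset m. \<forall>y\<in>set_mset m. \<not> E x y)" by blast
next
  assume "\<not> (\<forall>x\<in>set_mset m. \<forall>y\<in>set_mset m. \<not> E x y)"
  then obtain x y where xy: "x \<in># m" "y \<in># m" "E x y" by blast
  then have "x \<noteq> y" using irr by metis
  then have "y \<in># m - {#x#}" using xy by (simp add: in_diff_count)
  then have "{#x, y#} \<subseteq># m" using xy by (simp add: insert_subset_eq_iff)
  then show "edge_monomial_ideal_mem E m" unfolding edge_monomial_ideal_mem_def using xy(3) by blast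
qed

lemma hilbert_fun_sum:
  assumes fin: "finite V" and irr: "\<forall>x y. E x y \<longrightarrow> x \<noteq> y"
  shows "hilbert_fun V E i = (\<Sum>S\<in>IS V E. Cnt S i)"
proof -
  have eq: "{m. set_mset m \<subseteq> V \<and> size m = i \<and> \<not> edge_monomial_ideal_mem E m}
      = (\<Union>S\<in>IS V E. {m. set_mset m = S \<and> size m = i})"
  proof (rule set_eqI)
    fix m
    have "m \<in> {m. set_mset m \<subseteq> V \<and> size m = i \<and> \<not> edge_monomial_ideal_mem E m}
       \<longleftrightarrow> set_mset m \<in> IS V E \<and> size m = i"
      unfolding mem_iff[OF irr] IS_def indep_set_def mem_Collect_eq by blast
    also have "\<dots> \<longleftrightarrow> m \<in> (\<Union>S\<in>IS V E. {m. set_mset m = S \<and> size m = i})" by blast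
    finally show "m \<in> {m. set_mset m \<subseteq> V \<and> size m = i \<and> \<not> edge_monomial_ideal_mem E m}
       \<longleftrightarrow> m \<in> (\<Union>S\<in>IS V E. {m. set_mset m = S \<and> size m = i})" .
  qed
  have "card (\<Union>S\<in>IS V E. {m. set_mset m = S \<and> size m = i}) = (\<Sum>S\<in>IS V E. card {m. set_mset m = S \<and> size m = i})"
  proof (rule card_UN_disjoint)
    show "finite (IS V E)" using fin by (rule IS_finite)
    show "\<forall>S\<in>IS V E. finite {m. set_mset m = S \<and> size m = i}"
    proof
      fix S assume "S \<in> IS V E"
      then have "S \<subseteq> V" by (rule IS_sub)
      then have "finite S" using fin finite_subset by blast
      then show "finite {m. set_mset m = S \<and> size m = i}" by (rule fin_exact)
    qed
    show "\<forall>S\<in>IS V E. \<forall>T\<in>IS V E. S \<noteq> T \<longrightarrow> {m. set_mset m = S \<and> size m = i} \<inter> {m. set_mset m = T \<and> size m = i} = {}"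
      by auto
  qed
  then show ?thesis unfolding hilbert_fun_def eq Cnt_def .
qed

lemma hs_sum:
  assumes fin: "finite V" and irr: "\<forall>x y. E x y \<longrightarrow> x \<noteq> y"
  shows "hilbert_series V E = (\<Sum>S\<in>IS V E. ES S)"
  by (rule fps_ext) (simp add: hilbert_series_def fps_sum_nth ES_def hilbert_fun_sum[OF fin irr])

lemma fps_hp:
  assumes fin: "finite V" and irr: "\<forall>x y. E x y \<longrightarrow> x \<noteq> y"
  shows "fps_of_poly (hp V E) = hilbert_series V E * (1 - fps_X) ^ indep_num V E"
proof -
  have "fps_of_poly (hp V E) = (\<Sum>S\<in>IS V E. fps_X ^ card S * (1 - fps_X) ^ (indep_num V E - card S))"
    by (simp only: hp_def W_def fps_of_poly_sum fps_of_poly_mult fps_of_poly_power fps_of_poly_diff fps_of_poly_1 px_def fps_of_poly_fps_X)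
  also have "\<dots> = (\<Sum>S\<in>IS V E. ES S * (1 - fps_X) ^ indep_num V E)"
  proof (rule sum.cong[OF refl])
    fix S assume S: "S \<in> IS V E"
    have fS: "finite S" by (rule finite_subset[OF IS_sub[OF S] fin])
    have le: "card S \<le> indep_num V E" using indep_num_ge[OF fin S] .
    have "fps_X ^ card S * (1 - fps_X) ^ (indep_num V E - card S)
        = ES S * (1 - fps_X) ^ card S * (1 - fps_X) ^ (indep_num V E - card S)"
      by (simp only: ES_card[OF fS])
    also have "\<dots> = ES S * (1 - fps_X) ^ (card S + (indep_num V E - card S))"
      by (simp only: power_add mult.assoc)
    also have "\<dots> = ES S * (1 - fps_X) ^ indep_num V E" using le by (simp only: le_add_diff_inverse)
    finally show "fps_X ^ card S * (1 - fps_X) ^ (indep_num V E - card S) = ES S * (1 - fps_X) ^ indep_num V E" .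
  qed
  also have "\<dots> = hilbert_series V E * (1 - fps_X) ^ indep_num V E"
    by (simp only: hs_sum[OF fin irr] sum_distrib_right)
  finally show ?thesis .
qed

lemma poly_hp:
  assumes fin: "finite V"
  shows "poly (hp V E) 1 \<noteq> 0"
proof -
  obtain S0 where S0: "S0 \<in> IS V E" "card S0 = indep_num V E" using indep_num_ex[OF fin] by blast
  have "poly (hp V E) 1 = (\<Sum>S\<in>IS V E. poly (W (indep_num V E) S) 1)"
    by (simp add: hp_def poly_sum)
  also have "\<dots> \<ge> poly (W (indep_num V E) S0) 1"
    by (rule member_le_sum) (use S0 IS_finite[OF fin] in \<open>auto simp: W_def px_def\<close>)
  finally have "poly (hp V E) 1 \<ge> poly (W (indep_num V E) S0) 1" .
  moreover have "poly (W (indep_num V E) S0) 1 = 1" using S0 by (simp add: W_def px_def)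
  ultimately show ?thesis by simp
qed

lemma hilb_repr_hp:
  assumes fin: "finite V" and irr: "\<forall>x y. E x y \<longrightarrow> x \<noteq> y"
  shows "hilb_repr V E (indep_num V E) (hp V E)"
  using fps_hp[OF fin irr] poly_hp[OF fin] by (simp add: hilb_repr_def)

lemma hilb_repr_unique:
  assumes fin: "finite V" and irr: "\<forall>x y. E x y \<longrightarrow> x \<noteq> y"
    and r: "hilb_repr V E d h"
  shows "d = indep_num V E \<and> h = hp V E"
proof -
  let ?a = "indep_num V E"
  let ?q = "1 - px"
  have fq: "fps_of_poly ?q = 1 - fps_X" by (simp add: px_def fps_of_poly_diff)
  have h1: "fps_of_poly h = hilbert_series V E * (1 - fps_X) ^ d" and h1': "poly h 1 \<noteq> 0"
    using r by (auto simp: hilb_repr_def)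
  have "fps_of_poly (h * ?q ^ ?a) = fps_of_poly (hp V E * ?q ^ d)"
    by (simp add: fps_of_poly_mult fps_of_poly_power fq h1 fps_hp[OF fin irr] ac_simps)
  then have eq: "h * ?q ^ ?a = hp V E * ?q ^ d" by (simp only: fps_of_poly_eq_iff)
  have "coeff ?q 0 = 1" by (simp add: px_def)
  then have qnz: "?q \<noteq> 0" by auto
  have pq: "poly ?q 1 = 0" by (simp add: px_def)
  have "d = ?a"
  proof (rule ccontr)
    assume "d \<noteq> ?a"
    then consider "d < ?a" | "?a < d" by linarith
    then show False
    proof cases
      case 1
      have pa: "?q ^ ?a = ?q ^ (?a - d) * ?q ^ d" using 1 by (simp flip: power_add)
      have "h * ?q ^ (?a - d) * ?q ^ d = hp V E * ?q ^ d"
        using eq unfolding pa by (simp only: mult.assoc)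
      then have e2: "hp V E = h * ?q ^ (?a - d)" using qnz by simp
      have "poly (hp V E) 1 = poly h 1 * (poly ?q 1) ^ (?a - d)" unfolding e2 by simp
      also have "\<dots> = 0" using 1 pq by simp
      finally have "poly (hp V E) 1 = 0" .
      then show False using poly_hp[OF fin] by simp
    next
      case 2
      have pa: "?q ^ d = ?q ^ (d - ?a) * ?q ^ ?a" using 2 by (simp flip: power_add)
      have "hp V E * ?q ^ (d - ?a) * ?q ^ ?a = h * ?q ^ ?a"
        using eq unfolding pa by (simp only: mult.assoc)
      then have e2: "h = hp V E * ?q ^ (d - ?a)" using qnz by simp
      have "poly h 1 = poly (hp V E) 1 * (poly ?q 1) ^ (d - ?a)" unfolding e2 by simp
      also have "\<dots> = 0" using 2 pq by simp
      finally have "poly h 1 = 0" .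
      then show False using h1' by simp
    qed
  qed
  moreover have "h = hp V E" using eq \<open>d = ?a\<close> qnz by simp
  ultimately show ?thesis by simp
qed

lemma quot_dim_eq:
  assumes fin: "finite V" and irr: "\<forall>x y. E x y \<longrightarrow> x \<noteq> y"
  shows "quot_dim V E = indep_num V E"
  unfolding quot_dim_def
proof (rule the_equality)
  show "\<exists>h. hilb_repr V E (indep_num V E) h" using hilb_repr_hp[OF fin irr] by (rule exI)
next
  fix d assume "\<exists>h. hilb_repr V E d h"
  then obtain h where "hilb_repr V E d h" by (elim exE)
  from hilb_repr_unique[OF fin irr this] show "d = indep_num V E" by (elim conjE)
qed

lemma h_poly_eq:
  assumes fin: "finite V" and irr: "\<forall>x y. E x y \<longrightarrow> x \<noteq> y"
  shows "h_poly V E = hp V E"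
  unfolding h_poly_def
proof (rule the_equality)
  show "\<exists>d. hilb_repr V E d (hp V E)" using hilb_repr_hp[OF fin irr] by (rule exI)
next
  fix h assume "\<exists>d. hilb_repr V E d h"
  then obtain d where "hilb_repr V E d h" by (elim exE)
  from hilb_repr_unique[OF fin irr this] show "h = hp V E" by (elim conjE)
qed


definition emb :: "nat \<Rightarrow> (nat \<Rightarrow> 'a set) \<Rightarrow> ('a + nat) set" where
  "emb n F = (\<Union>i<n. Inl ` F i)"

definition rst :: "nat \<Rightarrow> (nat \<Rightarrow> 'a set) \<Rightarrow> ('a + nat) set \<Rightarrow> nat \<Rightarrow> 'a set" where
  "rst n Vs S = restrict (\<lambda>i. {x \<in> Vs i. Inl x \<in> S}) {..<n}"

lemma indep_minus: "indep_set (V - A) E S \<longleftrightarrow> indep_set V E S \<and> S \<inter> A = {}"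
  unfolding indep_set_def by blast

context
  fixes n :: nat and Vs :: "nat \<Rightarrow> 'a set" and Es :: "nat \<Rightarrow> 'a \<Rightarrow> 'a \<Rightarrow> bool" and As :: "nat \<Rightarrow> 'a set"
  assumes graphs: "\<And>i. i < n \<Longrightarrow> simple_graph (Vs i) (Es i)"
    and disj: "\<And>i j. i < n \<Longrightarrow> j < n \<Longrightarrow> i \<noteq> j \<Longrightarrow> Vs i \<inter> Vs j = {}"
    and Asub: "\<And>i. i < n \<Longrightarrow> As i \<subseteq> Vs i"
begin

lemma same_idx: "i < n \<Longrightarrow> k < n \<Longrightarrow> x \<in> Vs i \<Longrightarrow> x \<in> Vs k \<Longrightarrow> i = k"
  using disj by blast

lemma Es_in: "i < n \<Longrightarrow> Es i x y \<Longrightarrow> x \<in> Vs i \<and> y \<in> Vs i"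
  using graphs unfolding simple_graph_def by blast

lemma Es_irr: "i < n \<Longrightarrow> \<forall>x y. Es i x y \<longrightarrow> x \<noteq> y"
  using graphs unfolding simple_graph_def by metis

lemma Vs_fin: "i < n \<Longrightarrow> finite (Vs i)"
  using graphs unfolding simple_graph_def by blast

lemma VH_fin: "finite (H_verts n Vs)"
  unfolding H_verts_def using Vs_fin by simp

lemma EH_irr: "\<forall>x y. H_edges n Es As x y \<longrightarrow> x \<noteq> y"
proof (intro allI impI)
  fix x y assume e: "H_edges n Es As x y"
  show "x \<noteq> y"
  proof
    assume "x = y"
    with e show False
    proof (cases x)
      case (Inl a)
      then obtain i where "i < n" "Es i a a" using e \<open>x = y\<close> by auto
      then show False using Es_irr by blast
    next
      case (Inr k) then show False using e \<open>x = y\<close> by auto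
    qed
  qed
qed

lemma rst_emb:
  assumes F: "\<And>i. i < n \<Longrightarrow> F i \<subseteq> Vs i" and i: "i < n"
  shows "{x \<in> Vs i. Inl x \<in> emb n F} = F i"
proof
  show "F i \<subseteq> {x \<in> Vs i. Inl x \<in> emb n F}" using F i by (auto simp: emb_def)
  show "{x \<in> Vs i. Inl x \<in> emb n F} \<subseteq> F i"
  proof
    fix x assume "x \<in> {x \<in> Vs i. Inl x \<in> emb n F}"
    then have x: "x \<in> Vs i" "Inl x \<in> emb n F" by auto
    then obtain k where k: "k < n" "x \<in> F k" by (auto simp: emb_def)
    then have "x \<in> Vs k" using F by blast
    then have "k = i" using same_idx[OF k(1) i] x(1) by blast
    then show "x \<in> F i" using k by simp
  qed
qed

lemma rst_insert_emb:
  assumes F: "\<And>i. i < n \<Longrightarrow> F i \<subseteq> Vs i" and i: "i < n"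
  shows "{x \<in> Vs i. Inl x \<in> insert (Inr j) (emb n F)} = F i"
  using rst_emb[OF F i] by simp

lemma emb_sub: "(\<And>i. i < n \<Longrightarrow> F i \<subseteq> Vs i) \<Longrightarrow> emb n F \<subseteq> H_verts n Vs"
  unfolding emb_def H_verts_def by blast

lemma emb_restrict: "emb n (restrict F {..<n}) = emb n F"
  unfolding emb_def by simp

lemma indep_emb:
  assumes F: "\<And>i. i < n \<Longrightarrow> F i \<subseteq> Vs i"
  shows "indep_set (H_verts n Vs) (H_edges n Es As) (emb n F) \<longleftrightarrow> (\<forall>i<n. indep_set (Vs i) (Es i) (F i))"
proof
  assume h: "indep_set (H_verts n Vs) (H_edges n Es As) (emb n F)"
  show "\<forall>i<n. indep_set (Vs i) (Es i) (F i)"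
  proof (intro allI impI)
    fix i assume i: "i < n"
    have "\<forall>x\<in>F i. \<forall>y\<in>F i. \<not> Es i x y"
    proof (intro ballI notI)
      fix x y assume "x \<in> F i" "y \<in> F i" "Es i x y"
      then have "Inl x \<in> emb n F" "Inl y \<in> emb n F" "H_edges n Es As (Inl x) (Inl y)"
        using i by (auto simp: emb_def)
      then show False using h unfolding indep_set_def by blast
    qed
    then show "indep_set (Vs i) (Es i) (F i)" using F[OF i] unfolding indep_set_def by blast
  qed
next
  assume h: "\<forall>i<n. indep_set (Vs i) (Es i) (F i)"
  have "\<forall>p\<in>emb n F. \<forall>q\<in>emb n F. \<not> H_edges n Es As p q"
  proof (intro ballI notI)
    fix p q assume p: "p \<in> emb n F" and q: "q \<in> emb n F" and e: "H_edges n Es As p q"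
    obtain i x where ix: "i < n" "x \<in> F i" "p = Inl x" using p by (auto simp: emb_def)
    obtain k y where ky: "k < n" "y \<in> F k" "q = Inl y" using q by (auto simp: emb_def)
    obtain l where l: "l < n" "Es l x y" using e ix ky by auto
    have "x \<in> Vs l" "y \<in> Vs l" using Es_in[OF l] by auto
    moreover have "x \<in> Vs i" "y \<in> Vs k" using F ix ky by auto
    ultimately have "i = l" "k = l" using same_idx ix(1) ky(1) l(1) by metis+
    then show False using h ix ky l unfolding indep_set_def by blast
  qed
  then show "indep_set (H_verts n Vs) (H_edges n Es As) (emb n F)"
    using emb_sub[OF F] unfolding indep_set_def by blast
qed

lemma indep_embY:
  assumes F: "\<And>i. i < n \<Longrightarrow> F i \<subseteq> Vs i" and j: "j < n"
  shows "indep_set (H_verts n Vs) (H_edges n Es As) (insert (Inr j) (emb n F))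
     \<longleftrightarrow> (\<forall>i<n. indep_set (Vs i) (Es i) (F i)) \<and> F j \<inter> As j = {}"
proof -
  have jV: "Inr j \<in> H_verts n Vs" using j by (simp add: H_verts_def)
  have "(\<forall>p\<in>emb n F. \<not> H_edges n Es As (Inr j) p \<and> \<not> H_edges n Es As p (Inr j)) \<longleftrightarrow> F j \<inter> As j = {}"
  proof
    assume a: "\<forall>p\<in>emb n F. \<not> H_edges n Es As (Inr j) p \<and> \<not> H_edges n Es As p (Inr j)"
    show "F j \<inter> As j = {}"
    proof (rule ccontr)
      assume "F j \<inter> As j \<noteq> {}"
      then obtain x where "x \<in> F j" "x \<in> As j" by blast
      then have "Inl x \<in> emb n F" "H_edges n Es As (Inr j) (Inl x)" using j by (auto simp: emb_def)
      then show False using a by blast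
    qed
  next
    assume a: "F j \<inter> As j = {}"
    show "\<forall>p\<in>emb n F. \<not> H_edges n Es As (Inr j) p \<and> \<not> H_edges n Es As p (Inr j)"
    proof
      fix p assume p: "p \<in> emb n F"
      obtain i x where ix: "i < n" "x \<in> F i" "p = Inl x" using p by (auto simp: emb_def)
      have "x \<notin> As j"
      proof
        assume "x \<in> As j"
        then have "x \<in> Vs j" using Asub[OF j] by blast
        moreover have "x \<in> Vs i" using F ix by blast
        ultimately have "i = j" using same_idx ix(1) j by metis
        then show False using a ix \<open>x \<in> As j\<close> by blast
      qed
      then show "\<not> H_edges n Es As (Inr j) p \<and> \<not> H_edges n Es As p (Inr j)" using ix by simp
    qed
  qed
  moreover have "\<not> H_edges n Es As (Inr j) (Inr j)" by simp
  ultimately show ?thesis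
    using indep_emb[OF F] jV unfolding indep_set_def by blast
qed

lemma card_emb:
  assumes F: "\<And>i. i < n \<Longrightarrow> F i \<subseteq> Vs i"
  shows "card (emb n F) = (\<Sum>i<n. card (F i))"
proof -
  have fin: "\<And>i. i < n \<Longrightarrow> finite (F i)" using F Vs_fin finite_subset by metis
  have "card (emb n F) = (\<Sum>i<n. card (Inl ` F i :: ('a + nat) set))"
    unfolding emb_def
  proof (rule card_UN_disjoint)
    show "finite {..<n}" by simp
    show "\<forall>i\<in>{..<n}. finite (Inl ` F i :: ('a + nat) set)" using fin by simp
    show "\<forall>i\<in>{..<n}. \<forall>j\<in>{..<n}. i \<noteq> j \<longrightarrow> (Inl ` F i :: ('a + nat) set) \<inter> Inl ` F j = {}"
    proof (intro ballI impI)
      fix i j assume ij: "i \<in> {..<n}" "j \<in> {..<n}" "i \<noteq> j"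
      have "F i \<inter> F j = {}" using disj[of i j] ij F[of i] F[of j] by auto
      then show "(Inl ` F i :: ('a + nat) set) \<inter> Inl ` F j = {}" by auto
    qed
  qed
  also have "\<dots> = (\<Sum>i<n. card (F i))"
    by (rule sum.cong[OF refl]) (simp add: card_image)
  finally show ?thesis .
qed

lemma card_embY:
  assumes F: "\<And>i. i < n \<Longrightarrow> F i \<subseteq> Vs i"
  shows "card (insert (Inr j) (emb n F)) = Suc (\<Sum>i<n. card (F i))"
proof -
  have "finite (emb n F)" using emb_sub[OF F] VH_fin finite_subset by metis
  moreover have "Inr j \<notin> emb n F" by (auto simp: emb_def)
  ultimately show ?thesis using card_emb[OF F] by simp
qed

end

context
  fixes n :: nat and Vs :: "nat \<Rightarrow> 'a set" and Es :: "nat \<Rightarrow> 'a \<Rightarrow> 'a \<Rightarrow> bool" and As :: "nat \<Rightarrow> 'a set"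
  assumes graphs: "\<And>i. i < n \<Longrightarrow> simple_graph (Vs i) (Es i)"
    and disj: "\<And>i j. i < n \<Longrightarrow> j < n \<Longrightarrow> i \<noteq> j \<Longrightarrow> Vs i \<inter> Vs j = {}"
    and Asub: "\<And>i. i < n \<Longrightarrow> As i \<subseteq> Vs i"
begin

lemmas ctxD = graphs disj Asub

lemma rst_sub: "i < n \<Longrightarrow> rst n Vs S i \<subseteq> Vs i"
  unfolding rst_def by auto

lemma rst_at: "i < n \<Longrightarrow> rst n Vs S i = {x \<in> Vs i. Inl x \<in> S}"
  unfolding rst_def by simp

lemma emb_rst_mem: "p \<in> emb n (rst n Vs S) \<longleftrightarrow> (\<exists>i<n. \<exists>x. p = Inl x \<and> x \<in> Vs i \<and> Inl x \<in> S)"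
  unfolding emb_def rst_def by auto

lemma S_decomp:
  assumes "S \<subseteq> H_verts n Vs"
  shows "S = (S \<inter> Inr ` {..<n}) \<union> emb n (rst n Vs S)"
proof
  show "S \<subseteq> (S \<inter> Inr ` {..<n}) \<union> emb n (rst n Vs S)"
  proof
    fix p assume p: "p \<in> S"
    then have "p \<in> H_verts n Vs" using assms by blast
    then consider (l) i a where "i < n" "a \<in> Vs i" "p = Inl a" | (r) k where "k < n" "p = Inr k"
      unfolding H_verts_def by blast
    then show "p \<in> (S \<inter> Inr ` {..<n}) \<union> emb n (rst n Vs S)"
    proof cases
      case l
      then have "p \<in> emb n (rst n Vs S)" unfolding emb_rst_mem using p by blast
      then show ?thesis by blast
    next
      case r then show ?thesis using p by blast
    qed
  qed
  show "(S \<inter> Inr ` {..<n}) \<union> emb n (rst n Vs S) \<subseteq> S"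
  proof
    fix p assume "p \<in> (S \<inter> Inr ` {..<n}) \<union> emb n (rst n Vs S)"
    then consider "p \<in> S" | "p \<in> emb n (rst n Vs S)" by blast
    then show "p \<in> S"
    proof cases
      case 2 then show ?thesis unfolding emb_rst_mem by blast
    qed
  qed
qed

lemma rst_emb_eq:
  assumes "F \<in> PiE {..<n} T" "\<And>i. i < n \<Longrightarrow> T i \<subseteq> Pow (Vs i)"
  shows "rst n Vs (emb n F) = F"
proof
  fix i show "rst n Vs (emb n F) i = F i"
  proof (cases "i < n")
    case True
    have Fs: "\<And>i. i < n \<Longrightarrow> F i \<subseteq> Vs i"
    proof -
      fix i assume i: "i < n"
      have "F i \<in> T i" by (rule PiE_mem[OF assms(1)]) (simp add: i)
      then show "F i \<subseteq> Vs i" using assms(2)[OF i] by blast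
    qed
    have e: "{x \<in> Vs i. Inl x \<in> emb n F} = F i"
      by (rule rst_emb[where n=n and Vs=Vs and Es=Es and As=As and F=F and i=i, OF ctxD Fs True])
    show ?thesis unfolding rst_at[OF True] e ..
  next
    case False
    have u: "F i = undefined" by (rule PiE_arb[OF assms(1)]) (simp add: False)
    show ?thesis unfolding u by (simp add: rst_def False)
  qed
qed

lemma rst_embY_eq:
  assumes "F \<in> PiE {..<n} T" "\<And>i. i < n \<Longrightarrow> T i \<subseteq> Pow (Vs i)"
  shows "rst n Vs (insert (Inr j) (emb n F)) = F"
proof
  fix i show "rst n Vs (insert (Inr j) (emb n F)) i = F i"
  proof (cases "i < n")
    case True
    have Fs: "\<And>i. i < n \<Longrightarrow> F i \<subseteq> Vs i"
    proof -
      fix i assume i: "i < n"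
      have "F i \<in> T i" by (rule PiE_mem[OF assms(1)]) (simp add: i)
      then show "F i \<subseteq> Vs i" using assms(2)[OF i] by blast
    qed
    have e: "{x \<in> Vs i. Inl x \<in> insert (Inr j) (emb n F)} = F i"
      by (rule rst_insert_emb[where n=n and Vs=Vs and Es=Es and As=As and F=F and i=i and j=j, OF ctxD Fs True])
    show ?thesis unfolding rst_at[OF True] e ..
  next
    case False
    have u: "F i = undefined" by (rule PiE_arb[OF assms(1)]) (simp add: False)
    show ?thesis unfolding u by (simp add: rst_def False)
  qed
qed

abbreviation "IH \<equiv> IS (H_verts n Vs) (H_edges n Es As)"
definition "NN = {S \<in> IH. S \<inter> Inr ` {..<n} = {}}"
definition "YY j = {S \<in> IH. Inr j \<in> S}"
definition "TT i = IS (Vs i) (Es i)"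
definition "TY j i = (if i = j then IS (Vs j - As j) (Es j) else IS (Vs i) (Es i))"

lemma TT_sub: "TT i \<subseteq> Pow (Vs i)"
  unfolding TT_def IS_def indep_set_def by blast

lemma TY_sub: "TY j i \<subseteq> Pow (Vs i)"
  unfolding TY_def IS_def indep_set_def by auto

lemma rst_in_PiE: "rst n Vs S \<in> PiE {..<n} T \<longleftrightarrow> (\<forall>i<n. {x \<in> Vs i. Inl x \<in> S} \<in> T i)"
  unfolding rst_def restrict_PiE_iff by blast

lemma bijN: "bij_betw (emb n) (PiE {..<n} TT) NN"
proof (rule bij_betw_byWitness[where f' = "rst n Vs"])
  show "\<forall>F\<in>PiE {..<n} TT. rst n Vs (emb n F) = F"
    using rst_emb_eq TT_sub by blast
  show "\<forall>S\<in>NN. emb n (rst n Vs S) = S"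
  proof
    fix S assume S: "S \<in> NN"
    then have sub: "S \<subseteq> H_verts n Vs" and e: "S \<inter> Inr ` {..<n} = {}" unfolding NN_def IS_def indep_set_def by auto
    from sub have d: "S = (S \<inter> Inr ` {..<n}) \<union> emb n (rst n Vs S)" by (rule S_decomp)
    show "emb n (rst n Vs S) = S" by (metis d e sup_bot_left)
  qed
  show "emb n ` PiE {..<n} TT \<subseteq> NN"
  proof
    fix S assume "S \<in> emb n ` PiE {..<n} TT"
    then obtain F where F: "F \<in> PiE {..<n} TT" "S = emb n F" by blast
    have Fs: "\<And>i. i < n \<Longrightarrow> F i \<subseteq> Vs i" using F TT_sub by blast
    have "\<forall>i<n. indep_set (Vs i) (Es i) (F i)" using F unfolding TT_def IS_def by auto
    then have "indep_set (H_verts n Vs) (H_edges n Es As) S" using indep_emb[where n=n and Vs=Vs and Es=Es and As=As, OF ctxD Fs] F by simp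
    moreover have "S \<inter> Inr ` {..<n} = {}" using F by (auto simp: emb_def)
    ultimately show "S \<in> NN" unfolding NN_def IS_def by simp
  qed
  show "rst n Vs ` NN \<subseteq> PiE {..<n} TT"
  proof
    fix G assume "G \<in> rst n Vs ` NN"
    then obtain S where S: "S \<in> NN" "G = rst n Vs S" by blast
    then have sub: "S \<subseteq> H_verts n Vs" and e0: "S \<inter> Inr ` {..<n} = {}" unfolding NN_def IS_def indep_set_def by auto
    from sub have d: "S = (S \<inter> Inr ` {..<n}) \<union> emb n (rst n Vs S)" by (rule S_decomp)
    have e: "emb n (rst n Vs S) = S" by (metis d e0 sup_bot_left)
    have "indep_set (H_verts n Vs) (H_edges n Es As) (emb n (rst n Vs S))"
      using e S unfolding NN_def IS_def by simp
    then have "\<forall>i<n. indep_set (Vs i) (Es i) (rst n Vs S i)"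
      using indep_emb[where n=n and Vs=Vs and Es=Es and As=As, OF ctxD, of "rst n Vs S"] rst_sub by blast
    then show "G \<in> PiE {..<n} TT" unfolding S(2) rst_in_PiE TT_def IS_def by (simp add: rst_at)
  qed
qed

lemma YY_Inr:
  assumes S: "S \<in> YY j"
  shows "j < n" "S \<inter> Inr ` {..<n} = {Inr j}"
proof -
  have ind: "indep_set (H_verts n Vs) (H_edges n Es As) S" and jS: "Inr j \<in> S"
    using S unfolding YY_def IS_def by auto
  then have "Inr j \<in> H_verts n Vs" unfolding indep_set_def by blast
  then show j: "j < n" unfolding H_verts_def by auto
  show "S \<inter> Inr ` {..<n} = {Inr j}"
  proof
    show "{Inr j} \<subseteq> S \<inter> Inr ` {..<n}" using j jS by auto
    show "S \<inter> Inr ` {..<n} \<subseteq> {Inr j}"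
    proof
      fix p assume p: "p \<in> S \<inter> Inr ` {..<n}"
      then obtain k where k: "k < n" "p = Inr k" by blast
      have "k = j"
      proof (rule ccontr)
        assume "k \<noteq> j"
        then have "H_edges n Es As (Inr j) (Inr k)" using j k by simp
        then show False using ind jS p k unfolding indep_set_def by blast
      qed
      then show "p \<in> {Inr j}" using k by simp
    qed
  qed
qed

lemma bijY:
  assumes j: "j < n"
  shows "bij_betw (\<lambda>F. insert (Inr j) (emb n F)) (PiE {..<n} (TY j)) (YY j)"
proof (rule bij_betw_byWitness[where f' = "rst n Vs"])
  show "\<forall>F\<in>PiE {..<n} (TY j). rst n Vs (insert (Inr j) (emb n F)) = F"
    using rst_embY_eq TY_sub by blast
  show "\<forall>S\<in>YY j. insert (Inr j) (emb n (rst n Vs S)) = S"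
  proof
    fix S assume S: "S \<in> YY j"
    then have "S \<subseteq> H_verts n Vs" unfolding YY_def IS_def indep_set_def by auto
    then have d: "S = (S \<inter> Inr ` {..<n}) \<union> emb n (rst n Vs S)" by (rule S_decomp)
    show "insert (Inr j) (emb n (rst n Vs S)) = S" by (metis d YY_Inr(2)[OF S] insert_is_Un)
  qed
  show "(\<lambda>F. insert (Inr j) (emb n F)) ` PiE {..<n} (TY j) \<subseteq> YY j"
  proof
    fix S assume "S \<in> (\<lambda>F. insert (Inr j) (emb n F)) ` PiE {..<n} (TY j)"
    then obtain F where F: "F \<in> PiE {..<n} (TY j)" "S = insert (Inr j) (emb n F)" by blast
    have Fs: "\<And>i. i < n \<Longrightarrow> F i \<subseteq> Vs i" using F TY_sub by blast
    have "\<forall>i<n. indep_set (Vs i) (Es i) (F i)"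
    proof (intro allI impI)
      fix i assume i: "i < n"
      then have "F i \<in> TY j i" using F by auto
      then show "indep_set (Vs i) (Es i) (F i)" unfolding TY_def IS_def
        by (cases "i = j") (auto simp: indep_minus)
    qed
    moreover have "F j \<inter> As j = {}"
    proof -
      have "F j \<in> TY j j" using F j by auto
      then show ?thesis by (simp add: TY_def IS_def indep_minus)
    qed
    ultimately have "indep_set (H_verts n Vs) (H_edges n Es As) S"
      using indep_embY[where n=n and Vs=Vs and Es=Es and As=As, OF ctxD Fs j] F by simp
    then show "S \<in> YY j" unfolding YY_def IS_def using F by simp
  qed
  show "rst n Vs ` YY j \<subseteq> PiE {..<n} (TY j)"
  proof
    fix G assume "G \<in> rst n Vs ` YY j"
    then obtain S where S: "S \<in> YY j" "G = rst n Vs S" by blast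
    then have "S \<subseteq> H_verts n Vs" unfolding YY_def IS_def indep_set_def by auto
    then have d: "S = (S \<inter> Inr ` {..<n}) \<union> emb n (rst n Vs S)" by (rule S_decomp)
    have e: "insert (Inr j) (emb n (rst n Vs S)) = S" by (metis d YY_Inr(2)[OF S(1)] insert_is_Un)
    have "indep_set (H_verts n Vs) (H_edges n Es As) (insert (Inr j) (emb n (rst n Vs S)))"
      using e S unfolding YY_def IS_def by simp
    then have h: "(\<forall>i<n. indep_set (Vs i) (Es i) (rst n Vs S i)) \<and> rst n Vs S j \<inter> As j = {}"
      using indep_embY[where n=n and Vs=Vs and Es=Es and As=As, OF ctxD, of "rst n Vs S" j] rst_sub j by blast
    have "\<forall>i<n. rst n Vs S i \<in> TY j i"
      using h unfolding TY_def IS_def by (auto simp: indep_minus)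
    then show "G \<in> PiE {..<n} (TY j)" unfolding S(2) rst_in_PiE by (simp add: rst_at)
  qed
qed

lemma IH_split: "IH = NN \<union> (\<Union>j<n. YY j)"
proof
  show "IH \<subseteq> NN \<union> (\<Union>j<n. YY j)"
  proof
    fix S assume S: "S \<in> IH"
    show "S \<in> NN \<union> (\<Union>j<n. YY j)"
    proof (cases "S \<inter> Inr ` {..<n} = {}")
      case True then show ?thesis using S unfolding NN_def by blast
    next
      case False
      then obtain j where "j < n" "Inr j \<in> S" by blast
      then show ?thesis using S unfolding YY_def by blast
    qed
  qed
  show "NN \<union> (\<Union>j<n. YY j) \<subseteq> IH" unfolding NN_def YY_def by blast
qed

lemma sum_IH:
  fixes g :: "('a + nat) set \<Rightarrow> 'b::comm_monoid_add"
  shows "(\<Sum>S\<in>IH. g S) = (\<Sum>F\<in>PiE {..<n} TT. g (emb n F))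
          + (\<Sum>j<n. \<Sum>F\<in>PiE {..<n} (TY j). g (insert (Inr j) (emb n F)))"
proof -
  have finIH: "finite IH" using IS_finite[OF VH_fin[where n=n and Vs=Vs and Es=Es and As=As, OF ctxD]] .
  have fN: "finite NN" using finIH unfolding NN_def by simp
  have fY: "\<And>j. finite (YY j)" using finIH unfolding YY_def by simp
  have d1: "NN \<inter> (\<Union>j<n. YY j) = {}" unfolding NN_def YY_def by auto
  have "(\<Sum>S\<in>IH. g S) = (\<Sum>S\<in>NN. g S) + (\<Sum>S\<in>(\<Union>j<n. YY j). g S)"
  proof -
    have fU: "finite (\<Union>j<n. YY j)" using fY by simp
    show ?thesis unfolding IH_split by (rule sum.union_disjoint[OF fN fU d1])
  qed
  also have "(\<Sum>S\<in>(\<Union>j<n. YY j). g S) = (\<Sum>j<n. \<Sum>S\<in>YY j. g S)"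
  proof (rule sum.UNION_disjoint)
    show "finite {..<n}" by simp
    show "\<forall>j\<in>{..<n}. finite (YY j)" using fY by blast
    show "\<forall>i\<in>{..<n}. \<forall>j\<in>{..<n}. i \<noteq> j \<longrightarrow> YY i \<inter> YY j = {}"
    proof (intro ballI impI)
      fix i j assume ij: "i \<in> {..<n}" "j \<in> {..<n}" "i \<noteq> j"
      show "YY i \<inter> YY j = {}"
      proof (rule ccontr)
        assume "YY i \<inter> YY j \<noteq> {}"
        then obtain S where S: "S \<in> YY i" "S \<in> YY j" by blast
        then have "Inr j \<in> S \<inter> Inr ` {..<n}" using ij unfolding YY_def by auto
        then show False using YY_Inr(2)[OF S(1)] ij by auto
      qed
    qed
  qed
  also have "(\<Sum>S\<in>NN. g S) = (\<Sum>F\<in>PiE {..<n} TT. g (emb n F))"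
    by (rule sum.reindex_bij_betw[OF bijN, symmetric])
  also have "(\<Sum>j<n. \<Sum>S\<in>YY j. g S) = (\<Sum>j<n. \<Sum>F\<in>PiE {..<n} (TY j). g (insert (Inr j) (emb n F)))"
  proof (rule sum.cong[OF refl])
    fix j assume "j \<in> {..<n}"
    then have j: "j < n" by simp
    show "(\<Sum>S\<in>YY j. g S) = (\<Sum>F\<in>PiE {..<n} (TY j). g (insert (Inr j) (emb n F)))"
      by (rule sum.reindex_bij_betw[OF bijY[OF j], symmetric])
  qed
  finally show ?thesis .
qed

end

lemma sum_if_split:
  fixes f :: "nat \<Rightarrow> nat"
  assumes j: "j < n"
  shows "(\<Sum>i<n. if i = j then b else f i) + f j = (\<Sum>i<n. f i) + b"
proof -
  have fin: "finite {..<n}" by simp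
  have jn: "j \<in> {..<n}" using j by simp
  have "(\<Sum>i<n. if i = j then b else f i) = b + (\<Sum>i\<in>{..<n} - {j}. if i = j then b else f i)"
    using sum.remove[OF fin jn, of "\<lambda>i. if i = j then b else f i"] by simp
  also have "(\<Sum>i\<in>{..<n} - {j}. if i = j then b else f i) = (\<Sum>i\<in>{..<n} - {j}. f i)"
    by (rule sum.cong) auto
  finally have 1: "(\<Sum>i<n. if i = j then b else f i) = b + (\<Sum>i\<in>{..<n} - {j}. f i)" .
  have 2: "(\<Sum>i<n. f i) = f j + (\<Sum>i\<in>{..<n} - {j}. f i)"
    using sum.remove[OF fin jn, of f] .
  show ?thesis using 1 2 by simp
qed

lemma W_prod:
  fixes c a :: "nat \<Rightarrow> nat"
  assumes "\<And>i. i < n \<Longrightarrow> c i \<le> a i"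
  shows "px ^ (\<Sum>i<n. c i) * (1 - px) ^ ((\<Sum>i<n. a i) - (\<Sum>i<n. c i))
       = (\<Prod>i<n. px ^ c i * (1 - px) ^ (a i - c i))"
proof -
  have "(\<Sum>i<n. a i) - (\<Sum>i<n. c i) = (\<Sum>i<n. a i - c i)"
    by (rule sum_subtractf_nat[symmetric]) (use assms in simp)
  then show ?thesis by (simp add: power_sum prod.distrib)
qed

context
  fixes n :: nat and Vs :: "nat \<Rightarrow> 'a set" and Es :: "nat \<Rightarrow> 'a \<Rightarrow> 'a \<Rightarrow> bool" and As :: "nat \<Rightarrow> 'a set"
  assumes graphs: "\<And>i. i < n \<Longrightarrow> simple_graph (Vs i) (Es i)"
    and disj: "\<And>i j. i < n \<Longrightarrow> j < n \<Longrightarrow> i \<noteq> j \<Longrightarrow> Vs i \<inter> Vs j = {}"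
    and Asub: "\<And>i. i < n \<Longrightarrow> As i \<subseteq> Vs i"
begin

lemmas ctxE = graphs disj Asub

abbreviation "al i \<equiv> indep_num (Vs i) (Es i)"
abbreviation "be i \<equiv> indep_num (Vs i - As i) (Es i)"
definition "ga j i = (if i = j then be j else al i)"

lemma TT_i: "TT Vs Es i = IS (Vs i) (Es i)"
  by (simp add: TT_def[where n=n and Vs=Vs and Es=Es and As=As, OF ctxE])

lemma TY_i: "TY Vs Es As j i = (if i = j then IS (Vs j - As j) (Es j) else IS (Vs i) (Es i))"
  by (simp add: TY_def[where n=n and Vs=Vs and Es=Es and As=As, OF ctxE])

lemma PiE_sub:
  assumes "F \<in> PiE {..<n} T" "\<And>i. T i \<subseteq> Pow (Vs i)"
  shows "\<And>i. i < n \<Longrightarrow> F i \<subseteq> Vs i"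
proof -
  fix i assume i: "i < n"
  have "F i \<in> T i" by (rule PiE_mem[OF assms(1)]) (simp add: i)
  then show "F i \<subseteq> Vs i" using assms(2)[of i] by blast
qed

lemma card_le_TT:
  assumes F: "F \<in> PiE {..<n} (TT Vs Es)" and i: "i < n"
  shows "card (F i) \<le> al i"
proof -
  have "F i \<in> TT Vs Es i" by (rule PiE_mem[OF F]) (simp add: i)
  then show ?thesis unfolding TT_i using indep_num_ge[OF Vs_fin[where n=n and Vs=Vs and Es=Es and As=As, OF ctxE i]] by blast
qed

lemma card_le_TY:
  assumes F: "F \<in> PiE {..<n} (TY Vs Es As j)" and i: "i < n"
  shows "card (F i) \<le> ga j i"
proof -
  have "F i \<in> TY Vs Es As j i" by (rule PiE_mem[OF F]) (simp add: i)
  then have m: "F i \<in> (if i = j then IS (Vs j - As j) (Es j) else IS (Vs i) (Es i))" unfolding TY_i .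
  show ?thesis
  proof (cases "i = j")
    case True
    have fin: "finite (Vs j - As j)" using Vs_fin[where n=n and Vs=Vs and Es=Es and As=As, OF ctxE i] True by simp
    have "F i \<in> IS (Vs j - As j) (Es j)" using m True by simp
    then show ?thesis using True indep_num_ge[OF fin] unfolding ga_def by simp
  next
    case False
    have "F i \<in> IS (Vs i) (Es i)" using m False by simp
    then show ?thesis using False indep_num_ge[OF Vs_fin[where n=n and Vs=Vs and Es=Es and As=As, OF ctxE i]] unfolding ga_def by simp
  qed
qed

lemma sum_ga: "j < n \<Longrightarrow> (\<Sum>i<n. ga j i) + al j = (\<Sum>i<n. al i) + be j"
  unfolding ga_def by (rule sum_if_split)

lemma W_N:
  assumes F: "F \<in> PiE {..<n} (TT Vs Es)"
  shows "W (\<Sum>i<n. al i) (emb n F) = (\<Prod>i<n. W (al i) (F i))"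
proof -
  have Fs: "\<And>i. i < n \<Longrightarrow> F i \<subseteq> Vs i" by (rule PiE_sub[OF F TT_sub[where n=n and Vs=Vs and Es=Es and As=As, OF ctxE]])
  have c: "card (emb n F) = (\<Sum>i<n. card (F i))" by (rule card_emb[where n=n and Vs=Vs and Es=Es and As=As, OF ctxE Fs])
  show ?thesis unfolding W_def c
    by (rule W_prod) (rule card_le_TT[OF F])
qed

lemma W_Y:
  assumes F: "F \<in> PiE {..<n} (TY Vs Es As j)" and j: "j < n" and lt: "be j < al j"
  shows "W (\<Sum>i<n. al i) (insert (Inr j) (emb n F))
       = px * (1 - px) ^ (al j - be j - 1) * (\<Prod>i<n. W (ga j i) (F i))"
proof -
  have Fs: "\<And>i. i < n \<Longrightarrow> F i \<subseteq> Vs i" by (rule PiE_sub[OF F TY_sub[where n=n and Vs=Vs and Es=Es and As=As, OF ctxE]])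
  have c: "card (insert (Inr j) (emb n F)) = Suc (\<Sum>i<n. card (F i))" by (rule card_embY[where n=n and Vs=Vs and Es=Es and As=As, OF ctxE Fs])
  have le: "\<And>i. i < n \<Longrightarrow> card (F i) \<le> ga j i" by (rule card_le_TY[OF F])
  have CG: "(\<Sum>i<n. card (F i)) \<le> (\<Sum>i<n. ga j i)" by (rule sum_mono) (use le in simp)
  have sg: "(\<Sum>i<n. ga j i) + al j = (\<Sum>i<n. al i) + be j" by (rule sum_ga[OF j])
  have ex: "(\<Sum>i<n. al i) - Suc (\<Sum>i<n. card (F i))
      = (al j - be j - 1) + ((\<Sum>i<n. ga j i) - (\<Sum>i<n. card (F i)))"
    using CG sg lt by linarith
  have "W (\<Sum>i<n. al i) (insert (Inr j) (emb n F))
      = px * (1 - px) ^ (al j - be j - 1) * (px ^ (\<Sum>i<n. card (F i)) * (1 - px) ^ ((\<Sum>i<n. ga j i) - (\<Sum>i<n. card (F i))))"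
    unfolding W_def c ex by (simp add: power_add ac_simps)
  also have "px ^ (\<Sum>i<n. card (F i)) * (1 - px) ^ ((\<Sum>i<n. ga j i) - (\<Sum>i<n. card (F i)))
      = (\<Prod>i<n. W (ga j i) (F i))"
    unfolding W_def by (rule W_prod) (rule le)
  finally show ?thesis .
qed

end

lemma px_facts: "px \<noteq> 0" "degree px = 1" "lead_coeff px = 1"
  "1 - px = [:1, -1:]" "1 - px \<noteq> 0" "degree (1 - px) = 1" "lead_coeff (1 - px) = -1"
proof -
  show q: "1 - px = [:1, -1:]" by (simp add: px_def one_pCons)
  show "px \<noteq> 0" "degree px = 1" "lead_coeff px = 1" by (simp_all add: px_def)
  show "1 - px \<noteq> 0" "degree (1 - px) = 1" "lead_coeff (1 - px) = -1" unfolding q by simp_all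
qed

context
  fixes n :: nat and Vs :: "nat \<Rightarrow> 'a set" and Es :: "nat \<Rightarrow> 'a \<Rightarrow> 'a \<Rightarrow> bool" and As :: "nat \<Rightarrow> 'a set"
  assumes graphs: "\<And>i. i < n \<Longrightarrow> simple_graph (Vs i) (Es i)"
    and disj: "\<And>i j. i < n \<Longrightarrow> j < n \<Longrightarrow> i \<noteq> j \<Longrightarrow> Vs i \<inter> Vs j = {}"
    and Asub: "\<And>i. i < n \<Longrightarrow> As i \<subseteq> Vs i"
begin

lemmas ctxF = graphs disj Asub

lemma alphaH:
  assumes lt: "\<And>j. j < n \<Longrightarrow> indep_num (Vs j - As j) (Es j) < indep_num (Vs j) (Es j)"
  shows "indep_num (H_verts n Vs) (H_edges n Es As) = (\<Sum>i<n. indep_num (Vs i) (Es i))"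
proof (rule antisym)
  let ?A = "\<Sum>i<n. indep_num (Vs i) (Es i)"
  have split: "IS (H_verts n Vs) (H_edges n Es As) = NN n Vs Es As \<union> (\<Union>j<n. YY n Vs Es As j)"
    by (rule IH_split[where n=n and Vs=Vs and Es=Es and As=As, OF ctxF])
  have surjN: "emb n ` PiE {..<n} (TT Vs Es) = NN n Vs Es As"
    using bij_betw_imp_surj_on[OF bijN[where n=n and Vs=Vs and Es=Es and As=As, OF ctxF]] .
  have surjY: "(\<lambda>F. insert (Inr j) (emb n F)) ` PiE {..<n} (TY Vs Es As j) = YY n Vs Es As j" if j: "j < n" for j
    using bij_betw_imp_surj_on[OF bijY[where n=n and Vs=Vs and Es=Es and As=As, OF ctxF j]] .
  have up: "card S \<le> ?A" if S: "S \<in> IS (H_verts n Vs) (H_edges n Es As)" for S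
  proof -
    have "S \<in> NN n Vs Es As \<or> (\<exists>j<n. S \<in> YY n Vs Es As j)" using S split by blast
    then show ?thesis
    proof
      assume "S \<in> NN n Vs Es As"
      then obtain F where F: "F \<in> PiE {..<n} (TT Vs Es)" "S = emb n F" using surjN by blast
      have Fs: "\<And>i. i < n \<Longrightarrow> F i \<subseteq> Vs i"
        by (rule PiE_sub[where n=n and Vs=Vs and Es=Es and As=As, OF ctxF F(1) TT_sub[where n=n and Vs=Vs and Es=Es and As=As, OF ctxF]])
      have "card S = (\<Sum>i<n. card (F i))" unfolding F(2) by (rule card_emb[where n=n and Vs=Vs and Es=Es and As=As, OF ctxF Fs])
      also have "\<dots> \<le> ?A"
        by (rule sum_mono) (use card_le_TT[where n=n and Vs=Vs and Es=Es and As=As, OF ctxF F(1)] in simp)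
      finally show ?thesis .
    next
      assume "\<exists>j<n. S \<in> YY n Vs Es As j"
      then obtain j where j: "j < n" "S \<in> YY n Vs Es As j" by blast
      then obtain F where F: "F \<in> PiE {..<n} (TY Vs Es As j)" "S = insert (Inr j) (emb n F)" using surjY[OF j(1)] by blast
      have Fs: "\<And>i. i < n \<Longrightarrow> F i \<subseteq> Vs i"
        by (rule PiE_sub[where n=n and Vs=Vs and Es=Es and As=As, OF ctxF F(1) TY_sub[where n=n and Vs=Vs and Es=Es and As=As, OF ctxF]])
      have "card S = Suc (\<Sum>i<n. card (F i))" unfolding F(2) by (rule card_embY[where n=n and Vs=Vs and Es=Es and As=As, OF ctxF Fs])
      also have "(\<Sum>i<n. card (F i)) \<le> (\<Sum>i<n. ga Vs Es As j i)"
        by (rule sum_mono) (use card_le_TY[where n=n and Vs=Vs and Es=Es and As=As, OF ctxF F(1)] in simp)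
      moreover have "(\<Sum>i<n. ga Vs Es As j i) + indep_num (Vs j) (Es j) = ?A + indep_num (Vs j - As j) (Es j)"
        by (rule sum_ga[where n=n and Vs=Vs and Es=Es and As=As, OF ctxF j(1)])
      moreover have "indep_num (Vs j - As j) (Es j) < indep_num (Vs j) (Es j)" by (rule lt[OF j(1)])
      ultimately show ?thesis by linarith
    qed
  qed
  obtain S0 where S0: "S0 \<in> IS (H_verts n Vs) (H_edges n Es As)" "card S0 = indep_num (H_verts n Vs) (H_edges n Es As)"
    using indep_num_ex[OF VH_fin[where n=n and Vs=Vs and Es=Es and As=As, OF ctxF]] by blast
  show "indep_num (H_verts n Vs) (H_edges n Es As) \<le> ?A" using up[OF S0(1)] S0(2) by simp
  define F0 where "F0 = (\<lambda>i\<in>{..<n}. SOME S. S \<in> IS (Vs i) (Es i) \<and> card S = indep_num (Vs i) (Es i))"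
  have F0i: "F0 i \<in> IS (Vs i) (Es i) \<and> card (F0 i) = indep_num (Vs i) (Es i)" if i: "i < n" for i
  proof -
    have "\<exists>S. S \<in> IS (Vs i) (Es i) \<and> card S = indep_num (Vs i) (Es i)"
      using indep_num_ex[OF Vs_fin[where n=n and Vs=Vs and Es=Es and As=As, OF ctxF i]] by blast
    then have "(SOME S. S \<in> IS (Vs i) (Es i) \<and> card S = indep_num (Vs i) (Es i)) \<in> IS (Vs i) (Es i)
       \<and> card (SOME S. S \<in> IS (Vs i) (Es i) \<and> card S = indep_num (Vs i) (Es i)) = indep_num (Vs i) (Es i)"
      by (rule someI_ex)
    then show ?thesis unfolding F0_def using i by simp
  qed
  have F0P: "F0 \<in> PiE {..<n} (TT Vs Es)"
    unfolding F0_def restrict_PiE_iff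
  proof
    fix i assume "i \<in> {..<n}"
    then have i: "i < n" by simp
    have "F0 i \<in> TT Vs Es i" using F0i[OF i] TT_i[where n=n and Vs=Vs and Es=Es and As=As, OF ctxF] by simp
    then show "(SOME S. S \<in> IS (Vs i) (Es i) \<and> card S = indep_num (Vs i) (Es i)) \<in> TT Vs Es i"
      unfolding F0_def using i by simp
  qed
  have Fs: "\<And>i. i < n \<Longrightarrow> F0 i \<subseteq> Vs i"
    by (rule PiE_sub[where n=n and Vs=Vs and Es=Es and As=As, OF ctxF F0P TT_sub[where n=n and Vs=Vs and Es=Es and As=As, OF ctxF]])
  have "emb n F0 \<in> NN n Vs Es As" using surjN F0P by blast
  then have inI: "emb n F0 \<in> IS (H_verts n Vs) (H_edges n Es As)" using split by blast
  have "card (emb n F0) = (\<Sum>i<n. card (F0 i))" by (rule card_emb[where n=n and Vs=Vs and Es=Es and As=As, OF ctxF Fs])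
  also have "\<dots> = ?A" by (rule sum.cong) (use F0i in simp_all)
  finally have "card (emb n F0) = ?A" .
  then show "?A \<le> indep_num (H_verts n Vs) (H_edges n Es As)"
    using indep_num_ge[OF VH_fin[where n=n and Vs=Vs and Es=Es and As=As, OF ctxF] inI] by simp
qed

end

context
  fixes n :: nat and Vs :: "nat \<Rightarrow> 'a set" and Es :: "nat \<Rightarrow> 'a \<Rightarrow> 'a \<Rightarrow> bool" and As :: "nat \<Rightarrow> 'a set"
  assumes graphs: "\<And>i. i < n \<Longrightarrow> simple_graph (Vs i) (Es i)"
    and disj: "\<And>i j. i < n \<Longrightarrow> j < n \<Longrightarrow> i \<noteq> j \<Longrightarrow> Vs i \<inter> Vs j = {}"
    and Asub: "\<And>i. i < n \<Longrightarrow> As i \<subseteq> Vs i"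
begin

lemmas ctxG = graphs disj Asub

lemma TTi: "TT Vs Es i = IS (Vs i) (Es i)"
  by (rule TT_i[where n=n and Vs=Vs and Es=Es and As=As, OF ctxG])
lemma TYi: "TY Vs Es As j i = (if i = j then IS (Vs j - As j) (Es j) else IS (Vs i) (Es i))"
  by (rule TY_i[where n=n and Vs=Vs and Es=Es and As=As, OF ctxG])
lemma gai: "ga Vs Es As j i = (if i = j then indep_num (Vs j - As j) (Es j) else indep_num (Vs i) (Es i))"
  by (rule ga_def[where n=n and Vs=Vs and Es=Es and As=As, OF ctxG])
lemma TTs: "TT Vs Es i \<subseteq> Pow (Vs i)"
  by (rule TT_sub[where n=n and Vs=Vs and Es=Es and As=As, OF ctxG])
lemma TYs: "TY Vs Es As j i \<subseteq> Pow (Vs i)"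
  by (rule TY_sub[where n=n and Vs=Vs and Es=Es and As=As, OF ctxG])
lemma Vsf: "i < n \<Longrightarrow> finite (Vs i)"
  by (rule Vs_fin[where n=n and Vs=Vs and Es=Es and As=As, OF ctxG])
lemma Esi: "i < n \<Longrightarrow> \<forall>x y. Es i x y \<longrightarrow> x \<noteq> y"
  by (rule Es_irr[where n=n and Vs=Vs and Es=Es and As=As, OF ctxG])

lemma hp_i: "i < n \<Longrightarrow> (\<Sum>s\<in>TT Vs Es i. W (indep_num (Vs i) (Es i)) s) = h_poly (Vs i) (Es i)"
  unfolding TTi
  by (simp add: h_poly_eq[OF Vsf Esi] hp_def)

lemma hpY_i:
  assumes i: "i < n"
  shows "(\<Sum>s\<in>TY Vs Es As j i. W (ga Vs Es As j i) s)
       = (if i = j then h_poly (Vs j - As j) (Es j) else h_poly (Vs i) (Es i))"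
proof (cases "i = j")
  case True
  have fin: "finite (Vs j - As j)" using Vsf[OF i] True by simp
  have irr: "\<forall>x y. Es j x y \<longrightarrow> x \<noteq> y" using Esi[OF i] True by simp
  show ?thesis using True
    unfolding TYi gai
    by (simp add: h_poly_eq[OF fin irr] hp_def)
next
  case False
  show ?thesis using False hp_i[OF i]
    unfolding TYi gai TTi
    by simp
qed

lemma hH:
  assumes lt: "\<And>j. j < n \<Longrightarrow> indep_num (Vs j - As j) (Es j) < indep_num (Vs j) (Es j)"
  shows "h_poly (H_verts n Vs) (H_edges n Es As)
     = (\<Prod>i<n. h_poly (Vs i) (Es i))
       + (\<Sum>j<n. px * (1 - px) ^ (indep_num (Vs j) (Es j) - indep_num (Vs j - As j) (Es j) - 1)
              * (\<Prod>i<n. if i = j then h_poly (Vs j - As j) (Es j) else h_poly (Vs i) (Es i)))"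
proof -
  let ?A = "\<Sum>i<n. indep_num (Vs i) (Es i)"
  have finTT: "finite (TT Vs Es i)"
    if "i < n" for i unfolding TTi using that by (simp add: IS_finite Vsf)
  have "h_poly (H_verts n Vs) (H_edges n Es As) = hp (H_verts n Vs) (H_edges n Es As)"
    by (rule h_poly_eq[OF VH_fin[where n=n and Vs=Vs and Es=Es and As=As, OF ctxG] EH_irr[where n=n and Vs=Vs and Es=Es and As=As, OF ctxG]])
  also have "\<dots> = (\<Sum>S\<in>IS (H_verts n Vs) (H_edges n Es As). W ?A S)"
  proof -
    have aH: "indep_num (H_verts n Vs) (H_edges n Es As) = ?A"
      by (rule alphaH[where n=n and Vs=Vs and Es=Es and As=As, OF ctxG lt])
    show ?thesis unfolding hp_def aH ..
  qed
  also have "\<dots> = (\<Sum>F\<in>PiE {..<n} (TT Vs Es). W ?A (emb n F))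
          + (\<Sum>j<n. \<Sum>F\<in>PiE {..<n} (TY Vs Es As j). W ?A (insert (Inr j) (emb n F)))"
    by (rule sum_IH[where n=n and Vs=Vs and Es=Es and As=As, OF ctxG])
  also have "(\<Sum>F\<in>PiE {..<n} (TT Vs Es). W ?A (emb n F)) = (\<Prod>i<n. h_poly (Vs i) (Es i))"
  proof -
    have "(\<Sum>F\<in>PiE {..<n} (TT Vs Es). W ?A (emb n F))
        = (\<Sum>F\<in>PiE {..<n} (TT Vs Es). \<Prod>i<n. W (indep_num (Vs i) (Es i)) (F i))"
      by (rule sum.cong[OF refl]) (rule W_N[where n=n and Vs=Vs and Es=Es and As=As, OF ctxG])
    also have "\<dots> = (\<Prod>i<n. \<Sum>s\<in>TT Vs Es i. W (indep_num (Vs i) (Es i)) s)"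
      by (rule prod_sum_PiE[symmetric]) (simp_all add: finTT)
    also have "\<dots> = (\<Prod>i<n. h_poly (Vs i) (Es i))"
      by (rule prod.cong[OF refl]) (simp add: hp_i)
    finally show ?thesis .
  qed
  also have "(\<Sum>j<n. \<Sum>F\<in>PiE {..<n} (TY Vs Es As j). W ?A (insert (Inr j) (emb n F)))
     = (\<Sum>j<n. px * (1 - px) ^ (indep_num (Vs j) (Es j) - indep_num (Vs j - As j) (Es j) - 1)
              * (\<Prod>i<n. if i = j then h_poly (Vs j - As j) (Es j) else h_poly (Vs i) (Es i)))"
  proof (rule sum.cong[OF refl])
    fix j assume "j \<in> {..<n}"
    then have j: "j < n" by simp
    let ?c = "px * (1 - px) ^ (indep_num (Vs j) (Es j) - indep_num (Vs j - As j) (Es j) - 1)"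
    have finTY: "finite (TY Vs Es As j i)"
      if "i < n" for i unfolding TYi using that by (simp add: IS_finite Vsf)
    have "(\<Sum>F\<in>PiE {..<n} (TY Vs Es As j). W ?A (insert (Inr j) (emb n F)))
        = (\<Sum>F\<in>PiE {..<n} (TY Vs Es As j). ?c * (\<Prod>i<n. W (ga Vs Es As j i) (F i)))"
      by (rule sum.cong[OF refl]) (rule W_Y[where n=n and Vs=Vs and Es=Es and As=As, OF ctxG _ j lt[OF j]])
    also have "\<dots> = ?c * (\<Sum>F\<in>PiE {..<n} (TY Vs Es As j). \<Prod>i<n. W (ga Vs Es As j i) (F i))"
      by (rule sum_distrib_left[symmetric])
    also have "(\<Sum>F\<in>PiE {..<n} (TY Vs Es As j). \<Prod>i<n. W (ga Vs Es As j i) (F i))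
        = (\<Prod>i<n. \<Sum>s\<in>TY Vs Es As j i. W (ga Vs Es As j i) s)"
      by (rule prod_sum_PiE[symmetric]) (simp_all add: finTY)
    also have "\<dots> = (\<Prod>i<n. if i = j then h_poly (Vs j - As j) (Es j) else h_poly (Vs i) (Es i))"
      by (rule prod.cong[OF refl]) (simp add: hpY_i)
    finally show "(\<Sum>F\<in>PiE {..<n} (TY Vs Es As j). W ?A (insert (Inr j) (emb n F))) = ?c * (\<Prod>i<n. if i = j then h_poly (Vs j - As j) (Es j) else h_poly (Vs i) (Es i))" .
  qed
  finally show ?thesis .
qed

end

lemma deg_lemma:
  fixes h g :: "nat \<Rightarrow> int poly" and e :: "nat \<Rightarrow> nat" and n :: nat
  assumes n: "n \<ge> 1"
    and nz: "\<And>i. i < n \<Longrightarrow> h i \<noteq> 0 \<and> g i \<noteq> 0"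
    and ev: "\<And>j. j < n \<Longrightarrow> even (e j)"
    and dg: "\<And>j. j < n \<Longrightarrow> degree (h j) = degree (g j) + e j"
    and sg: "(\<forall>i<n. lead_coeff (h i) > 0 \<and> lead_coeff (g i) > 0) \<or> (\<forall>i<n. lead_coeff (h i) < 0 \<and> lead_coeff (g i) < 0)"
  shows "degree ((\<Prod>i<n. h i) + (\<Sum>j<n. px * (1 - px) ^ (e j) * (\<Prod>i<n. if i = j then g j else h i)))
       = 1 + (\<Sum>i<n. degree (h i))"
proof -
  define D where "D = 1 + (\<Sum>i<n. degree (h i))"
  define Q where "Q j = (\<Prod>i<n. if i = j then g j else h i)" for j
  define T where "T j = px * (1 - px) ^ (e j) * Q j" for j
  have Qnz: "Q j \<noteq> 0" if j: "j < n" for j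
    unfolding Q_def using nz j by (auto simp: prod_zero_iff)
  have degQ: "degree (Q j) + e j = (\<Sum>i<n. degree (h i))" if j: "j < n" for j
  proof -
    have "degree (Q j) = (\<Sum>i<n. degree (if i = j then g j else h i))"
      unfolding Q_def by (rule degree_prod_eq_sum_degree) (use nz j in auto)
    also have "\<dots> = (\<Sum>i<n. if i = j then degree (g j) else degree (h i))"
      by (rule sum.cong) auto
    finally have "degree (Q j) + degree (h j) = (\<Sum>i<n. degree (h i)) + degree (g j)"
      using sum_if_split[OF j, of "degree (g j)" "\<lambda>i. degree (h i)"] by simp
    then show ?thesis using dg[OF j] by simp
  qed
  have degT: "degree (T j) = D" if j: "j < n" for j
  proof -
    have "degree (T j) = degree px + degree ((1 - px) ^ e j) + degree (Q j)"
      unfolding T_def using px_facts Qnz[OF j] by (simp add: degree_mult_eq)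
    also have "\<dots> = 1 + e j + degree (Q j)" using px_facts by (simp add: degree_power_eq)
    finally show ?thesis unfolding D_def using degQ[OF j] by simp
  qed
  have lcT: "lead_coeff (T j) = (\<Prod>i<n. if i = j then lead_coeff (g j) else lead_coeff (h i))" if j: "j < n" for j
  proof -
    have "lead_coeff (T j) = lead_coeff px * lead_coeff (1 - px) ^ e j * lead_coeff (Q j)"
      unfolding T_def by (simp add: lead_coeff_mult lead_coeff_power)
    also have "\<dots> = lead_coeff (Q j)" using px_facts ev[OF j] by simp
    also have "\<dots> = (\<Prod>i<n. lead_coeff (if i = j then g j else h i))"
      unfolding Q_def by (rule lead_coeff_prod)
    also have "\<dots> = (\<Prod>i<n. if i = j then lead_coeff (g j) else lead_coeff (h i))"
      by (rule prod.cong) auto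
    finally show ?thesis .
  qed
  define \<sigma> :: int where "\<sigma> = (if (\<forall>i<n. lead_coeff (h i) > 0 \<and> lead_coeff (g i) > 0) then 1 else (-1) ^ n)"
  have pos: "\<sigma> * lead_coeff (T j) > 0" if j: "j < n" for j
  proof (cases "\<forall>i<n. lead_coeff (h i) > 0 \<and> lead_coeff (g i) > 0")
    case True
    then have "lead_coeff (T j) > 0" unfolding lcT[OF j] using j by (intro prod_pos) auto
    then show ?thesis using True by (simp add: \<sigma>_def)
  next
    case False
    then have neg: "\<forall>i<n. lead_coeff (h i) < 0 \<and> lead_coeff (g i) < 0" using sg by blast
    have "(-1) ^ n * (\<Prod>i<n. if i = j then lead_coeff (g j) else lead_coeff (h i))
        = (\<Prod>i<n. - (if i = j then lead_coeff (g j) else lead_coeff (h i)))"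
    proof -
      have "(\<Prod>i<n. - (if i = j then lead_coeff (g j) else lead_coeff (h i)))
          = (\<Prod>i<n. (-1) * (if i = j then lead_coeff (g j) else lead_coeff (h i)))" by simp
      also have "\<dots> = (\<Prod>i<n. (-1::int)) * (\<Prod>i<n. if i = j then lead_coeff (g j) else lead_coeff (h i))"
        by (rule prod.distrib)
      also have "(\<Prod>i<n. (-1::int)) = (-1) ^ n" by simp
      finally show ?thesis by simp
    qed
    also have "\<dots> > 0" using neg j by (intro prod_pos) auto
    finally have "(-1) ^ n * lead_coeff (T j) > 0" unfolding lcT[OF j] .
    moreover have "\<sigma> = (-1) ^ n" using False unfolding \<sigma>_def by auto
    ultimately show ?thesis by simp
  qed
  have cP: "coeff (\<Prod>i<n. h i) D = 0"
  proof (rule coeff_eq_0)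
    have "degree (\<Prod>i<n. h i) = (\<Sum>i<n. degree (h i))"
      by (rule degree_prod_eq_sum_degree) (use nz in auto)
    then show "degree (\<Prod>i<n. h i) < D" unfolding D_def by simp
  qed
  have cT: "coeff (\<Sum>j<n. T j) D = (\<Sum>j<n. lead_coeff (T j))"
    unfolding coeff_sum by (rule sum.cong) (simp_all add: degT)
  have "\<sigma> * coeff (\<Sum>j<n. T j) D > 0"
  proof -
    have "0 \<in> {..<n}" using n by simp
    then have ne: "{..<n} \<noteq> {}" by blast
    show ?thesis unfolding cT sum_distrib_left using ne pos by (intro sum_pos) auto
  qed
  then have cnz: "coeff ((\<Prod>i<n. h i) + (\<Sum>j<n. T j)) D \<noteq> 0" using cP by auto
  have "degree ((\<Prod>i<n. h i) + (\<Sum>j<n. T j)) \<le> D"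
  proof (rule degree_add_le)
    have "degree (\<Prod>i<n. h i) = (\<Sum>i<n. degree (h i))"
      by (rule degree_prod_eq_sum_degree) (use nz in auto)
    then show "degree (\<Prod>i<n. h i) \<le> D" unfolding D_def by simp
    show "degree (\<Sum>j<n. T j) \<le> D" by (rule degree_sum_le) (simp_all add: degT)
  qed
  moreover have "D \<le> degree ((\<Prod>i<n. h i) + (\<Sum>j<n. T j))" by (rule le_degree[OF cnz])
  ultimately show ?thesis unfolding D_def T_def Q_def by simp
qed


theorem lemma3p2:
  fixes n :: nat
    and Vs :: "nat \<Rightarrow> 'a set"
    and Es :: "nat \<Rightarrow> 'a \<Rightarrow> 'a \<Rightarrow> bool"
    and As :: "nat \<Rightarrow> 'a set"
  assumes n: "n \<ge> 1"
    and graphs: "\<And>i. i < n \<Longrightarrow> simple_graph (Vs i) (Es i)"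
    and disj: "\<And>i j. i < n \<Longrightarrow> j < n \<Longrightarrow> i \<noteq> j \<Longrightarrow> Vs i \<inter> Vs j = {}"
    and Asub: "\<And>i. i < n \<Longrightarrow> As i \<subseteq> Vs i"
    and a: "\<And>i. i < n \<Longrightarrow>
              odd (int (indep_num (Vs i) (Es i)) - int (indep_num (Vs i - As i) (Es i)))
            \<and> int (indep_num (Vs i) (Es i)) - int (indep_num (Vs i - As i) (Es i)) \<ge> 1"
    and b: "\<And>i. i < n \<Longrightarrow>
              int (hdeg (Vs i) (Es i)) - int (hdeg (Vs i - As i) (Es i))
            = int (indep_num (Vs i) (Es i)) - int (indep_num (Vs i - As i) (Es i)) - 1"
    and c: "(\<forall>i<n. lead_coeff (h_poly (Vs i) (Es i)) > 0
                  \<and> lead_coeff (h_poly (Vs i - As i) (Es i)) > 0)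
          \<or> (\<forall>i<n. lead_coeff (h_poly (Vs i) (Es i)) < 0
                  \<and> lead_coeff (h_poly (Vs i - As i) (Es i)) < 0)"
  shows "quot_dim (H_verts n Vs) (H_edges n Es As) = (\<Sum>i<n. indep_num (Vs i) (Es i))
       \<and> hdeg (H_verts n Vs) (H_edges n Es As) = 1 + (\<Sum>i<n. hdeg (Vs i) (Es i))"
proof -
  have lt: "indep_num (Vs j - As j) (Es j) < indep_num (Vs j) (Es j)" if j: "j < n" for j
    using a[OF j] by linarith
  have ev: "even (indep_num (Vs j) (Es j) - indep_num (Vs j - As j) (Es j) - 1)" if j: "j < n" for j
  proof -
    have "int (indep_num (Vs j) (Es j) - indep_num (Vs j - As j) (Es j))
        = int (indep_num (Vs j) (Es j)) - int (indep_num (Vs j - As j) (Es j))"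
      using lt[OF j] by simp
    then have "odd (indep_num (Vs j) (Es j) - indep_num (Vs j - As j) (Es j))"
      using a[OF j] by (metis even_of_nat)
    then show ?thesis using lt[OF j] by simp
  qed
  have dg: "degree (h_poly (Vs j) (Es j)) = degree (h_poly (Vs j - As j) (Es j))
      + (indep_num (Vs j) (Es j) - indep_num (Vs j - As j) (Es j) - 1)" if j: "j < n" for j
    using b[OF j] lt[OF j] unfolding hdeg_def by linarith
  have nz: "h_poly (Vs i) (Es i) \<noteq> 0 \<and> h_poly (Vs i - As i) (Es i) \<noteq> 0" if i: "i < n" for i
    using c i by auto
  have fin: "finite (H_verts n Vs)"
    by (rule VH_fin[where n=n and Vs=Vs and Es=Es and As=As, OF graphs disj Asub])
  have irr: "\<forall>x y. H_edges n Es As x y \<longrightarrow> x \<noteq> y"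
    by (rule EH_irr[where n=n and Vs=Vs and Es=Es and As=As, OF graphs disj Asub])
  have aH: "indep_num (H_verts n Vs) (H_edges n Es As) = (\<Sum>i<n. indep_num (Vs i) (Es i))"
    by (rule alphaH[where n=n and Vs=Vs and Es=Es and As=As, OF graphs disj Asub lt])
  have hH: "h_poly (H_verts n Vs) (H_edges n Es As)
     = (\<Prod>i<n. h_poly (Vs i) (Es i))
       + (\<Sum>j<n. px * (1 - px) ^ (indep_num (Vs j) (Es j) - indep_num (Vs j - As j) (Es j) - 1)
              * (\<Prod>i<n. if i = j then h_poly (Vs j - As j) (Es j) else h_poly (Vs i) (Es i)))"
    by (rule hH[where n=n and Vs=Vs and Es=Es and As=As, OF graphs disj Asub lt])
  have D: "degree ((\<Prod>i<n. h_poly (Vs i) (Es i))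
       + (\<Sum>j<n. px * (1 - px) ^ (indep_num (Vs j) (Es j) - indep_num (Vs j - As j) (Es j) - 1)
              * (\<Prod>i<n. if i = j then h_poly (Vs j - As j) (Es j) else h_poly (Vs i) (Es i))))
       = 1 + (\<Sum>i<n. degree (h_poly (Vs i) (Es i)))"
    by (rule deg_lemma[where h = "\<lambda>i. h_poly (Vs i) (Es i)" and g = "\<lambda>i. h_poly (Vs i - As i) (Es i)"
          and e = "\<lambda>j. indep_num (Vs j) (Es j) - indep_num (Vs j - As j) (Es j) - 1", OF n nz ev dg c])
  show ?thesis
  proof
    show "quot_dim (H_verts n Vs) (H_edges n Es As) = (\<Sum>i<n. indep_num (Vs i) (Es i))"
      using quot_dim_eq[OF fin irr] aH by simp
    show "hdeg (H_verts n Vs) (H_edges n Es As) = 1 + (\<Sum>i<n. hdeg (Vs i) (Es i))"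
      unfolding hdeg_def hH D ..
  qed
qed


end
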